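(* Let $\varphi(x)=P(x)/Q(x)$ be a rational function, regular at $x=0$, whose Taylor series at $x=0$ is symplectic. Then there exists a rational function $\rho(y)$ such that $\varphi(x)=\rho\big(x^2/(1-x)\big)$.
   Context: A formal power series $\varphi(x)=\sum_{i\ge0}\gamma_i x^i\in\mathbb{C}[[x]]$ is called symplectic if for every $m\ge1$ one has $\sum_{k=0}^{m-1}(-1)^k\binom{m-1}{k}\gamma_{m+k}=0$. *)

theory Defs
  imports Complex_Main "HOL-Computational_Algebra.Computational_Algebra"
begin

definition symplectic :: "complex fps \<Rightarrow> bool" where
  "symplectic f \<longleftrightarrow>
     (\<forall>m::nat. m \<ge> 1 \<longrightarrow>
        (\<Sum>k<m. (-1)^k * of_nat ((m - 1) choose k) * fps_nth f (m + k)) = 0)"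

end

theory Submission
  imports Defs
begin

definition Yf :: "complex fps" where "Yf = fps_X^2 * inverse (1 - fps_X)"
definition ev :: "complex poly \<Rightarrow> complex fps" where "ev A = fps_of_poly A oo Yf"
definition Lk :: "nat \<Rightarrow> complex fps \<Rightarrow> complex" where
  "Lk k f = (f * (1 - fps_X)^k) $ (2*k+1)"

lemma Y0: "Yf $ 0 = 0"
  by (simp add: Yf_def)

lemma Y1: "Yf * (1 - fps_X) = fps_X^2"
proof -
  have "inverse (1 - fps_X) * (1 - fps_X) = (1::complex fps)"
    by (rule inverse_mult_eq_1) simp
  thus ?thesis unfolding Yf_def by (metis mult.assoc mult.right_neutral)
qed

lemma Yrel: "fps_X * fps_X = Yf - fps_X * Yf"
  using Y1 by (simp add: algebra_simps power2_eq_square)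

lemma ev_0[simp]: "ev 0 = 0" by (simp add: ev_def fps_eq_iff fps_compose_nth)
lemma ev_add: "ev (A + B) = ev A + ev B"
  by (simp add: ev_def fps_of_poly_add fps_compose_add_distrib)
lemma ev_diff: "ev (A - B) = ev A - ev B"
  by (simp add: ev_def fps_of_poly_diff fps_compose_sub_distrib)
lemma ev_mult: "ev (A * B) = ev A * ev B"
  by (simp add: ev_def fps_of_poly_mult fps_compose_mult_distrib Y0)
lemma ev_pCons: "ev (pCons c A) = fps_const c + Yf * ev A"
  by (simp add: ev_def fps_of_poly_pCons fps_compose_add_distrib fps_compose_mult_distrib Y0 mult.commute)
lemma ev_X: "ev [:0,1:] = Yf"
  by (simp add: ev_def Y0)

lemma binom_coeff: "((1 - fps_X)^k :: complex fps) $ i = (-1)^i * of_nat (k choose i)"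
proof (induction k arbitrary: i)
  case 0 then show ?case by (cases i) auto
next
  case (Suc k)
  have e: "(1 - fps_X)^(Suc k) = (1 - fps_X)^k - fps_X * ((1 - fps_X)^k :: complex fps)"
    by (simp add: left_diff_distrib)
  show ?case
  proof (cases i)
    case 0 then show ?thesis by (simp add: e Suc)
  next
    case (Suc j)
    then show ?thesis by (simp add: e Suc.IH algebra_simps)
  qed
qed

lemma L_add: "Lk k (a + b) = Lk k a + Lk k b" by (simp add: Lk_def distrib_right)
lemma L_const: "Lk k (fps_const c * a) = c * Lk k a" by (simp add: Lk_def mult.assoc)

lemma L_Y_Suc: "Lk (Suc k) (Yf * f) = Lk k f"
proof -
  have "Yf * f * (1 - fps_X)^(Suc k) = (Yf * (1 - fps_X)) * (f * (1 - fps_X)^k)"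
    by (simp only: power_Suc mult_ac)
  also have "\<dots> = fps_X^2 * (f * (1 - fps_X)^k)" by (simp only: Y1)
  finally have e: "Yf * f * (1 - fps_X)^(Suc k) = fps_X^2 * (f * (1 - fps_X)^k)" .
  show ?thesis unfolding Lk_def e by (simp add: fps_X_power_mult_nth)
qed

lemma L_Y_0: "Lk 0 (Yf * f) = 0"
  by (simp add: Lk_def Yf_def mult.assoc fps_X_power_mult_nth)

lemma L_1: "Lk k 1 = 0"
  by (simp add: Lk_def binom_coeff)

lemma L_X: "Lk k fps_X = (if k = 0 then 1 else 0)"
  by (simp add: Lk_def binom_coeff)

lemma L_evmult:
  assumes "\<forall>k. Lk k f = 0"
  shows "Lk k (ev A * f) = 0"
proof (induction A arbitrary: k rule: pCons_induct)
  case 0 then show ?case by (simp add: Lk_def)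
next
  case (pCons c A)
  have "ev (pCons c A) * f = fps_const c * f + Yf * (ev A * f)"
    by (simp add: ev_pCons algebra_simps)
  then show ?case using assms pCons.IH
    by (cases k) (simp_all add: L_add L_const L_Y_0 L_Y_Suc)
qed

lemma L_ev: "Lk k (ev A) = 0"
  using L_evmult[of 1 k A] L_1 by simp

lemma L_Xev: "Lk k (fps_X * ev A) = coeff A k"
proof (induction A arbitrary: k rule: pCons_induct)
  case 0 then show ?case by (simp add: Lk_def)
next
  case (pCons c A)
  have "fps_X * ev (pCons c A) = fps_const c * fps_X + Yf * (fps_X * ev A)"
    by (simp add: ev_pCons algebra_simps)
  then show ?case using pCons.IH
    by (cases k) (simp_all add: L_add L_const L_Y_0 L_Y_Suc L_X)
qed

lemma decomp:
  "\<exists>A B. fps_of_poly F = ev A + fps_X * ev B \<and>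
     (\<forall>x::complex. x \<noteq> 1 \<longrightarrow> poly F x = poly A (x^2/(1-x)) + x * poly B (x^2/(1-x)))"
proof (induction F rule: pCons_induct)
  case 0
  show ?case by (rule exI[of _ 0], rule exI[of _ 0]) simp
next
  case (pCons c F)
  then obtain A B where h1: "fps_of_poly F = ev A + fps_X * ev B"
    and h2: "\<forall>x::complex. x \<noteq> 1 \<longrightarrow> poly F x = poly A (x^2/(1-x)) + x * poly B (x^2/(1-x))"
    by blast
  show ?case
  proof (intro exI conjI allI impI)
    show "fps_of_poly (pCons c F) = ev (pCons c B) + fps_X * ev (A - pCons 0 B)"
    proof -
      have "fps_of_poly (pCons c F) = fps_const c + (ev A + fps_X * ev B) * fps_X"
        by (simp add: fps_of_poly_pCons h1)
      also have "\<dots> = fps_const c + Yf * ev B + fps_X * (ev A - Yf * ev B)"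
      proof -
        have "(ev A + fps_X * ev B) * fps_X = fps_X * ev A + (fps_X * fps_X) * ev B"
          by (simp add: algebra_simps)
        also have "\<dots> = fps_X * ev A + (Yf - fps_X * Yf) * ev B" by (simp only: Yrel)
        finally show ?thesis by (simp add: algebra_simps)
      qed
      also have "\<dots> = ev (pCons c B) + fps_X * ev (A - pCons 0 B)"
        by (simp add: ev_pCons ev_diff)
      finally show ?thesis .
    qed
  next
    fix x :: complex assume x: "x \<noteq> 1"
    have x1: "1 - x \<noteq> 0" using x by simp
    define y where "y = x^2/(1-x)"
    have h: "y*(1-x) = x*x" using x1 by (simp add: y_def power2_eq_square)
    have yx: "x*x = y - x*y" using h by (simp add: algebra_simps)
    have "poly (pCons c F) x = c + x*(poly A y + x*poly B y)" using h2 x by (simp add: y_def)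
    also have "\<dots> = c + x*poly A y + (x*x)*poly B y" by (simp add: algebra_simps)
    also have "\<dots> = c + x * poly A y + (y - x*y)*poly B y" by (simp only: yx)
    also have "\<dots> = poly (pCons c B) y + x * poly (A - pCons 0 B) y" by (simp add: algebra_simps)
    finally show "poly (pCons c F) x = poly (pCons c B) (x^2/(1-x)) + x * poly (A - pCons 0 B) (x^2/(1-x))"
      by (simp add: y_def)
  qed
qed

lemma L_sympl:
  "Lk k f = (-1)^k * (\<Sum>i<Suc k. (-1)^i * of_nat (k choose i) * f $ (Suc k + i))"
proof -
  have "Lk k f = (\<Sum>j=0..2*k+1. f $ j * ((-1)^(2*k+1-j) * of_nat (k choose (2*k+1-j))))"
    by (simp add: Lk_def fps_mult_nth binom_coeff)
  also have "\<dots> = (\<Sum>j=0..k. f $ j * ((-1)^(2*k+1-j) * of_nat (k choose (2*k+1-j))))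
      + (\<Sum>j=Suc k..2*k+1. f $ j * ((-1)^(2*k+1-j) * of_nat (k choose (2*k+1-j))))"
  proof -
    have "{0..2*k+1} = {0..k} \<union> {Suc k..2*k+1}" by auto
    then show ?thesis by (simp only:) (rule sum.union_disjoint, auto)
  qed
  also have "(\<Sum>j=0..k. f $ j * ((-1)^(2*k+1-j) * of_nat (k choose (2*k+1-j)))) = 0"
    by (intro sum.neutral) auto
  also have "(\<Sum>j=Suc k..2*k+1. f $ j * ((-1)^(2*k+1-j) * of_nat (k choose (2*k+1-j))))
     = (\<Sum>i=0..k. f $ (Suc k + i) * ((-1)^(k-i) * of_nat (k choose (k-i))))"
  proof -
    have "{Suc k..2*k+1} = (\<lambda>i. Suc k + i) ` {0..k}" 
    proof (rule set_eqI, rule iffI)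
      fix x assume "x \<in> {Suc k..2*k+1}"
      then show "x \<in> (\<lambda>i. Suc k + i) ` {0..k}" by (intro image_eqI[of _ _ "x - Suc k"]) auto
    qed auto
    moreover have "\<And>i. Suc (2*k) - Suc (k+i) = k - i" by arith
    ultimately show ?thesis by (simp add: sum.reindex inj_on_def)
  qed
  also have "\<dots> = (\<Sum>i=0..k. (-1)^k * ((-1)^i * of_nat (k choose i) * f $ (Suc k + i)))"
  proof (intro sum.cong refl)
    fix i assume "i \<in> {0..k}"
    then obtain d where d: "k = i + d" by (auto simp: le_iff_add)
    have "(-1::complex)^(k-i) = (-1)^k * (-1)^i" 
      by (simp add: d power_add mult_ac)
    moreover have "k choose (k-i) = k choose i" using d binomial_symmetric[of i k] by simp
    ultimately show "f $ (Suc k + i) * ((-1)^(k-i) * of_nat (k choose (k-i))) =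
        (-1)^k * ((-1)^i * of_nat (k choose i) * f $ (Suc k + i))" by simp
  qed
  finally show ?thesis by (simp add: sum_distrib_left atLeast0AtMost lessThan_Suc_atMost)
qed

theorem lemma3p1:
  fixes P Q :: "complex poly"
  assumes "poly Q 0 \<noteq> 0"
    and "symplectic (fps_of_poly P / fps_of_poly Q)"
  shows "\<exists>R S :: complex poly. S \<noteq> 0 \<and>
           (\<forall>x::complex. x \<noteq> 1 \<and> poly Q x \<noteq> 0 \<and> poly S (x^2 / (1 - x)) \<noteq> 0 \<longrightarrow>
              poly P x / poly Q x = poly R (x^2 / (1 - x)) / poly S (x^2 / (1 - x)))"
proof -
  define phi where "phi = fps_of_poly P / fps_of_poly Q"
  have Q0: "fps_of_poly Q $ 0 \<noteq> 0" using assms(1) by (simp add: poly_0_coeff_0)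
  have phiQ: "phi * fps_of_poly Q = fps_of_poly P"
    using Q0 unfolding phi_def fps_divide_unit[OF Q0]
    by (simp add: mult.assoc inverse_mult_eq_1)
  have Lphi: "\<forall>k. Lk k phi = 0"
  proof
    fix k
    have "(\<Sum>i<Suc k. (-1)^i * of_nat ((Suc k - 1) choose i) * phi $ (Suc k + i)) = 0"
      using assms(2) unfolding symplectic_def phi_def by (drule_tac spec[of _ "Suc k"]) simp
    then show "Lk k phi = 0" by (simp add: L_sympl)
  qed
  obtain aP bP where dP: "fps_of_poly P = ev aP + fps_X * ev bP"
    and pP: "\<forall>x::complex. x \<noteq> 1 \<longrightarrow> poly P x = poly aP (x^2/(1-x)) + x * poly bP (x^2/(1-x))"
    using decomp[of P] by blast
  obtain aQ bQ where dQ: "fps_of_poly Q = ev aQ + fps_X * ev bQ"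
    and pQ: "\<forall>x::complex. x \<noteq> 1 \<longrightarrow> poly Q x = poly aQ (x^2/(1-x)) + x * poly bQ (x^2/(1-x))"
    using decomp[of Q] by blast
  define C where "C = bP * aQ - aP * bQ"
  define Nn where "Nn = aQ * aQ - [:0,1:] * (aQ * bQ + bQ * bQ)"
  define U where "U = aP * aQ - [:0,1:] * (aP * bQ + bP * bQ)"
  define Qb where "Qb = ev (aQ - [:0,1:] * bQ) - fps_X * ev bQ"
  have evN: "ev Nn = ev aQ * ev aQ - Yf * (ev aQ * ev bQ + ev bQ * ev bQ)"
    by (simp add: Nn_def ev_diff ev_mult ev_add ev_X ev_pCons)
  have evU: "ev U = ev aP * ev aQ - Yf * (ev aP * ev bQ + ev bP * ev bQ)"
    by (simp add: U_def ev_diff ev_mult ev_add ev_X ev_pCons)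
  have evC: "ev C = ev bP * ev aQ - ev aP * ev bQ"
    by (simp add: C_def ev_diff ev_mult)
  have Qb': "Qb = ev aQ - Yf * ev bQ - fps_X * ev bQ"
    by (simp add: Qb_def ev_diff ev_mult ev_X ev_pCons)
  have c1: "fps_of_poly Q * Qb = ev Nn"
  proof -
    have "fps_of_poly Q * Qb = ev aQ * ev aQ - Yf * (ev aQ * ev bQ) - (fps_X * fps_X) * (ev bQ * ev bQ)
        - fps_X * Yf * (ev bQ * ev bQ)"
      by (simp add: dQ Qb' algebra_simps)
    also have "\<dots> = ev aQ * ev aQ - Yf * (ev aQ * ev bQ) - (Yf - fps_X * Yf) * (ev bQ * ev bQ)
        - fps_X * Yf * (ev bQ * ev bQ)" by (simp only: Yrel)
    also have "\<dots> = ev Nn" by (simp add: evN algebra_simps)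
    finally show ?thesis .
  qed
  have c2: "fps_of_poly P * Qb = ev U + fps_X * ev C"
  proof -
    have "fps_of_poly P * Qb = ev aP * ev aQ - Yf * (ev aP * ev bQ) - fps_X * (ev aP * ev bQ)
        + fps_X * (ev bP * ev aQ) - fps_X * Yf * (ev bP * ev bQ) - (fps_X * fps_X) * (ev bP * ev bQ)"
      by (simp add: dP Qb' algebra_simps)
    also have "\<dots> = ev aP * ev aQ - Yf * (ev aP * ev bQ) - fps_X * (ev aP * ev bQ)
        + fps_X * (ev bP * ev aQ) - fps_X * Yf * (ev bP * ev bQ) - (Yf - fps_X * Yf) * (ev bP * ev bQ)"
      by (simp only: Yrel)
    also have "\<dots> = ev U + fps_X * ev C" by (simp add: evU evC algebra_simps)
    finally show ?thesis .
  qed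
  have "ev Nn * phi = (phi * fps_of_poly Q) * Qb"
    by (simp only: c1[symmetric] mult.assoc mult.commute mult.left_commute)
  also have "\<dots> = ev U + fps_X * ev C" by (simp only: phiQ c2)
  finally have e: "ev Nn * phi = ev U + fps_X * ev C" .
  have "\<forall>k. Lk k (ev U + fps_X * ev C) = 0"
  proof
    fix k show "Lk k (ev U + fps_X * ev C) = 0" using L_evmult[OF Lphi, of k Nn] by (simp only: e)
  qed
  then have "\<forall>k. coeff C k = 0" by (simp add: L_add L_ev L_Xev)
  then have C0: "C = 0" by (simp add: poly_eq_iff)
  have aQ0: "aQ \<noteq> 0"
  proof
    assume "aQ = 0"
    then have "poly Q 0 = 0" using pQ by simp
    with assms(1) show False by simp
  qed
  show ?thesis
  proof (intro exI conjI allI impI)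
    show "aQ \<noteq> 0" by (rule aQ0)
  next
    fix x :: complex
    assume h: "x \<noteq> 1 \<and> poly Q x \<noteq> 0 \<and> poly aQ (x^2/(1-x)) \<noteq> 0"
    define y where "y = x^2/(1-x)"
    have "poly (bP * aQ - aP * bQ) y = 0" using C0 by (simp add: C_def)
    then have py: "poly bP y * poly aQ y - poly aP y * poly bQ y = 0" by simp
    have ePx: "poly P x = poly aP y + x * poly bP y" using pP h by (simp add: y_def)
    have eQx: "poly Q x = poly aQ y + x * poly bQ y" using pQ h by (simp add: y_def)
    have "poly P x * poly aQ y = poly aP y * poly Q x"
    proof -
      have "poly P x * poly aQ y - poly aP y * poly Q x = x * (poly bP y * poly aQ y - poly aP y * poly bQ y)"
        unfolding ePx eQx by (simp add: algebra_simps)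
      then show ?thesis using py by simp
    qed
    then show "poly P x / poly Q x = poly aP (x^2/(1-x)) / poly aQ (x^2/(1-x))"
      using h by (simp add: y_def frac_eq_eq mult.commute)
  qed
qed

end
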